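(* Let $W\in\mathcal{P}(\mathcal{Y}|\mathcal{X})$ with $C(W)>0$, $\delta>0$ and $\epsilon\in(0,1)$, and let $R_N=C(W)+\sqrt{V_\epsilon(W)/N}\,\Phi^{-1}(\epsilon)$. There is $N_{\mathrm o}(W,\epsilon,\delta)\in\mathbb{Z}^+$ such that for every $N\ge N_{\mathrm o}(W,\epsilon,\delta)$, every $(N,R_N)$ constant composition code whose common composition $Q_N$ belongs to $\mathcal{S}_3(\delta)$ has average error probability strictly greater than $\epsilon$.
   Context: $\mathcal{X},\mathcal{Y}$ finite; memoryless channel. An $(N,R)$ constant composition code: encoder $\{1,\dots,\lceil e^{NR}\rceil\}\to\mathcal{X}^N$ whose codewords all have the same empirical distribution (the common composition), and decoder $\mathcal{Y}^N\to\mathcal{M}$; average error over uniform messages. $C(W)$ capacity; $\Phi$ standard Gaussian CDF. $\mathcal{P}^*_W=\{P:I(P;W)=C(W)\}$; $\mathcal{S}_3(\delta)=\{P\in\mathcal{P}(\mathcal{X}):\min_{P^*\in\mathcal{P}^*_W}\|P-P^*\|_2>\delta\}$. $q_P(y)=\sum_xP(x)W(y|x)$, $V(P,W)=\sum_{x,y}P(x)W(y|x)[\ln\frac{W(y|x)}{q_P(y)}-\sum_bW(b|x)\ln\frac{W(b|x)}{q_P(b)}]^2$, $V_\epsilon(W)=\min_{Q\in\mathcal{P}^*_W}V(Q,W)$ for $\epsilon<1/2$ and $\max_{Q\in\mathcal{P}^*_W}V(Q,W)$ for $\epsilon\ge1/2$. *)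

theory Defs
  imports "HOL-Probability.Probability"
begin

definition is_pd :: "('a::finite \<Rightarrow> real) \<Rightarrow> bool" where
  "is_pd P \<longleftrightarrow> (\<forall>x. P x \<ge> 0) \<and> (\<Sum>x\<in>UNIV. P x) = 1"

text \<open>Channel W y x = W(y|x): a stochastic matrix.\<close>
definition is_channel :: "('y::finite \<Rightarrow> 'x::finite \<Rightarrow> real) \<Rightarrow> bool" where
  "is_channel W \<longleftrightarrow> (\<forall>x. is_pd (\<lambda>y. W y x))"

definition outdist :: "('x::finite \<Rightarrow> real) \<Rightarrow> ('y::finite \<Rightarrow> 'x \<Rightarrow> real) \<Rightarrow> 'y \<Rightarrow> real" where
  "outdist P W y = (\<Sum>x\<in>UNIV. P x * W y x)"

definition mutual_info :: "('x::finite \<Rightarrow> real) \<Rightarrow> ('y::finite \<Rightarrow> 'x \<Rightarrow> real) \<Rightarrow> real" where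
  "mutual_info P W = (\<Sum>x\<in>UNIV. \<Sum>y\<in>UNIV.
     (if P x * W y x = 0 then 0 else P x * W y x * ln (W y x / outdist P W y)))"

definition capacity :: "('y::finite \<Rightarrow> 'x::finite \<Rightarrow> real) \<Rightarrow> real" where
  "capacity W = (SUP P\<in>{P. is_pd P}. mutual_info P W)"

definition cap_achieving :: "('y::finite \<Rightarrow> 'x::finite \<Rightarrow> real) \<Rightarrow> ('x \<Rightarrow> real) set" where
  "cap_achieving W = {P. is_pd P \<and> mutual_info P W = capacity W}"

definition info_dens :: "('x::finite \<Rightarrow> real) \<Rightarrow> ('y::finite \<Rightarrow> 'x \<Rightarrow> real) \<Rightarrow> 'x \<Rightarrow> 'y \<Rightarrow> real" where
  "info_dens P W x y = (if W y x = 0 then 0 else ln (W y x / outdist P W y))"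

definition cond_var :: "('x::finite \<Rightarrow> real) \<Rightarrow> ('y::finite \<Rightarrow> 'x \<Rightarrow> real) \<Rightarrow> real" where
  "cond_var P W = (\<Sum>x\<in>UNIV. \<Sum>y\<in>UNIV. P x * W y x *
     (info_dens P W x y - (\<Sum>b\<in>UNIV. W b x * info_dens P W x b))\<^sup>2)"

definition V_eps :: "real \<Rightarrow> ('y::finite \<Rightarrow> 'x::finite \<Rightarrow> real) \<Rightarrow> real" where
  "V_eps \<epsilon> W = (if \<epsilon> < 1/2 then (INF Q\<in>cap_achieving W. cond_var Q W)
                   else (SUP Q\<in>cap_achieving W. cond_var Q W))"

definition dist2 :: "('x::finite \<Rightarrow> real) \<Rightarrow> ('x \<Rightarrow> real) \<Rightarrow> real" where
  "dist2 P Q = sqrt (\<Sum>x\<in>UNIV. (P x - Q x)\<^sup>2)"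

text \<open>S_3(delta): distributions at l2-distance more than delta from every capacity achieving one
  (the min over the compact set P^*_W is written as an Inf).\<close>
definition S3 :: "('y::finite \<Rightarrow> 'x::finite \<Rightarrow> real) \<Rightarrow> real \<Rightarrow> ('x \<Rightarrow> real) set" where
  "S3 W \<delta> = {P. is_pd P \<and> (INF Ps\<in>cap_achieving W. dist2 P Ps) > \<delta>}"

definition Phi :: "real \<Rightarrow> real" where
  "Phi t = (LINT s:{..t}|lborel. std_normal_density s)"

definition Phi_inv :: "real \<Rightarrow> real" where
  "Phi_inv e = (THE t. Phi t = e)"

definition composition :: "'x list \<Rightarrow> 'x \<Rightarrow> real" where
  "composition xs x = real (length (filter (\<lambda>z. z = x) xs)) / real (length xs)"

definition num_msgs :: "nat \<Rightarrow> real \<Rightarrow> nat" where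
  "num_msgs N R = nat \<lceil>exp (real N * R)\<rceil>"

definition chan_prob :: "('y::finite \<Rightarrow> 'x \<Rightarrow> real) \<Rightarrow> 'x list \<Rightarrow> 'y list \<Rightarrow> real" where
  "chan_prob W xs ys = (\<Prod>i<length xs. W (ys ! i) (xs ! i))"

definition avg_error ::
  "('y::finite \<Rightarrow> 'x \<Rightarrow> real) \<Rightarrow> nat \<Rightarrow> nat \<Rightarrow> (nat \<Rightarrow> 'x list) \<Rightarrow> ('y list \<Rightarrow> nat) \<Rightarrow> real" where
  "avg_error W N M enc dec = (1 / real M) * (\<Sum>m\<in>{1..M}.
      \<Sum>ys\<in>{ys. length ys = N \<and> dec ys \<noteq> m}. chan_prob W (enc m) ys)"

text \<open>An (N,R) constant composition code with common composition Q (decoder values outside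
  the message set count as errors).\<close>
definition cc_code ::
  "nat \<Rightarrow> real \<Rightarrow> ('x \<Rightarrow> real) \<Rightarrow> (nat \<Rightarrow> 'x list) \<Rightarrow> ('y list \<Rightarrow> nat) \<Rightarrow> bool" where
  "cc_code N R Q enc dec \<longleftrightarrow>
     (\<forall>m\<in>{1..num_msgs N R}. length (enc m) = N \<and> composition (enc m) = Q)"

end

theory Submission
  imports Defs
begin

definition Ln :: "nat \<Rightarrow> 'y list set" where "Ln n = {ys. length ys = n}"

lemma finite_Ln: "finite (Ln n :: ('y::finite) list set)"
proof -
  have "Ln n = {ys::'y list. set ys \<subseteq> UNIV \<and> length ys = n}" by (auto simp: Ln_def)
  then show ?thesis using finite_lists_length_eq[of "UNIV::'y set" n] by simp
qed

lemma Ln_Suc: "Ln (Suc n) = (\<lambda>(y,ys). y # ys) ` (UNIV \<times> Ln n)"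
  unfolding Ln_def by (auto simp: image_def length_Suc_conv)

lemma sum_Ln_Suc:
  fixes F :: "('y::finite) list \<Rightarrow> real"
  shows "(\<Sum>ys\<in>Ln (Suc n). F ys) = (\<Sum>y\<in>UNIV. \<Sum>ys\<in>Ln n. F (y # ys))"
proof -
  have inj: "inj_on (\<lambda>(y,ys). y # ys) (UNIV \<times> Ln n)" by (auto simp: inj_on_def)
  have "(\<Sum>ys\<in>Ln (Suc n). F ys) = (\<Sum>p\<in>UNIV \<times> Ln n. F ((\<lambda>(y,ys). y # ys) p))"
    unfolding Ln_Suc by (rule sum.reindex[OF inj, unfolded comp_def])
  also have "\<dots> = (\<Sum>y\<in>UNIV. \<Sum>ys\<in>Ln n. F (y # ys))"
    by (simp add: sum.cartesian_product case_prod_unfold)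
  finally show ?thesis .
qed

lemma Ln_0: "Ln 0 = {[]}" by (auto simp: Ln_def)

lemma sum_prod_Ln:
  fixes a :: "'x \<Rightarrow> 'y::finite \<Rightarrow> real"
  shows "(\<Sum>ys\<in>Ln (length xs). \<Prod>i<length xs. a (xs!i) (ys!i)) = (\<Prod>i<length xs. \<Sum>y\<in>UNIV. a (xs!i) y)"
proof (induction xs)
  case Nil then show ?case by (simp add: Ln_0)
next
  case (Cons x xs)
  have "(\<Sum>ys\<in>Ln (length (x#xs)). \<Prod>i<length (x#xs). a ((x#xs)!i) (ys!i))
      = (\<Sum>y\<in>UNIV. \<Sum>ys\<in>Ln (length xs). a x y * (\<Prod>i<length xs. a (xs!i) (ys!i)))"
    unfolding length_Cons sum_Ln_Suc prod.lessThan_Suc_shift by simp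
  also have "\<dots> = (\<Sum>y\<in>UNIV. a x y) * (\<Prod>i<length xs. \<Sum>y\<in>UNIV. a (xs!i) y)"
    by (simp add: sum_distrib_left[symmetric] sum_distrib_right Cons.IH)
  also have "\<dots> = (\<Prod>i<length (x#xs). \<Sum>y\<in>UNIV. a ((x#xs)!i) y)"
    unfolding length_Cons prod.lessThan_Suc_shift by simp
  finally show ?case .
qed

lemma chan_prob_Cons: "chan_prob W (x#xs) (y#ys) = W y x * chan_prob W xs ys"
  unfolding chan_prob_def length_Cons prod.lessThan_Suc_shift by simp

lemma sum_chan_prob:
  assumes "is_channel W"
  shows "(\<Sum>ys\<in>Ln (length xs). chan_prob W xs ys) = 1"
proof -
  have "(\<Sum>ys\<in>Ln (length xs). chan_prob W xs ys) = (\<Prod>i<length xs. \<Sum>y\<in>UNIV. W y (xs!i))"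
    unfolding chan_prob_def Ln_def[symmetric] using sum_prod_Ln[of "\<lambda>x y. W y x" xs]
    by (simp add: Ln_def)
  also have "\<dots> = 1" using assms by (simp add: is_channel_def is_pd_def)
  finally show ?thesis .
qed

lemma second_moment:
  fixes W :: "'y::finite \<Rightarrow> 'x::finite \<Rightarrow> real"
  assumes "is_channel W" and cen: "\<And>x. (\<Sum>y\<in>UNIV. W y x * g x y) = 0"
  shows "(\<Sum>ys\<in>Ln (length xs). chan_prob W xs ys * (\<Sum>i<length xs. g (xs!i) (ys!i))\<^sup>2)
     = (\<Sum>i<length xs. \<Sum>y\<in>UNIV. W y (xs!i) * (g (xs!i) y)\<^sup>2)"
proof (induction xs)
  case Nil then show ?case by (simp add: Ln_0 chan_prob_def)
next
  case (Cons x xs)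
  let ?Z = "\<lambda>ys. (\<Sum>i<length xs. g (xs!i) (ys!i))"
  let ?P = "\<lambda>ys. chan_prob W xs ys"
  have s1: "(\<Sum>ys\<in>Ln (length xs). ?P ys) = 1" by (rule sum_chan_prob[OF assms(1)])
  have "(\<Sum>ys\<in>Ln (length (x#xs)). chan_prob W (x#xs) ys * (\<Sum>i<length (x#xs). g ((x#xs)!i) (ys!i))\<^sup>2)
      = (\<Sum>y\<in>UNIV. \<Sum>ys\<in>Ln (length xs). W y x * ?P ys * (g x y + ?Z ys)\<^sup>2)"
    unfolding length_Cons sum_Ln_Suc chan_prob_Cons sum.lessThan_Suc_shift by simp
  also have "\<dots> = (\<Sum>y\<in>UNIV. \<Sum>ys\<in>Ln (length xs).
        W y x * (g x y)\<^sup>2 * ?P ys + 2 * (W y x * g x y) * (?P ys * ?Z ys) + W y x * (?P ys * (?Z ys)\<^sup>2))"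
    by (intro sum.cong refl) (simp add: power2_eq_square algebra_simps)
  also have "\<dots> = (\<Sum>y\<in>UNIV. W y x * (g x y)\<^sup>2 * (\<Sum>ys\<in>Ln (length xs). ?P ys)
        + 2 * (W y x * g x y) * (\<Sum>ys\<in>Ln (length xs). ?P ys * ?Z ys)
        + W y x * (\<Sum>ys\<in>Ln (length xs). ?P ys * (?Z ys)\<^sup>2))"
    by (simp add: sum.distrib sum_distrib_left)
  also have "\<dots> = (\<Sum>y\<in>UNIV. W y x * (g x y)\<^sup>2) * (\<Sum>ys\<in>Ln (length xs). ?P ys) + (\<Sum>y\<in>UNIV. 2 * (W y x * g x y)) * (\<Sum>ys\<in>Ln (length xs). ?P ys * ?Z ys)
        + (\<Sum>y\<in>UNIV. W y x) * (\<Sum>ys\<in>Ln (length xs). ?P ys * (?Z ys)\<^sup>2)"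
    by (simp only: sum.distrib sum_distrib_right)
  also have "\<dots> = (\<Sum>y\<in>UNIV. W y x * (g x y)\<^sup>2) + (\<Sum>i<length xs. \<Sum>y\<in>UNIV. W y (xs!i) * (g (xs!i) y)\<^sup>2)"
    using assms(1) cen[of x] Cons.IH s1 by (simp add: is_channel_def is_pd_def sum_distrib_left[symmetric])
  also have "\<dots> = (\<Sum>i<length (x#xs). \<Sum>y\<in>UNIV. W y ((x#xs)!i) * (g ((x#xs)!i) y)\<^sup>2)"
    unfolding length_Cons sum.lessThan_Suc_shift by simp
  finally show ?case .
qed

lemma sum_count:
  fixes h :: "'x::finite \<Rightarrow> real"
  shows "(\<Sum>i<length xs. h (xs!i)) = (\<Sum>x\<in>UNIV. real (length (filter (\<lambda>z. z = x) xs)) * h x)"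
proof (induction xs)
  case Nil then show ?case by simp
next
  case (Cons a xs)
  have "(\<Sum>x\<in>UNIV. real (length (filter (\<lambda>z. z = x) (a#xs))) * h x)
     = (\<Sum>x\<in>UNIV. (if x = a then h x else 0) + real (length (filter (\<lambda>z. z = x) xs)) * h x)"
    by (intro sum.cong refl) (auto simp: algebra_simps)
  also have "\<dots> = h a + (\<Sum>x\<in>UNIV. real (length (filter (\<lambda>z. z = x) xs)) * h x)"
    by (simp add: sum.distrib sum.delta')
  finally show ?case using Cons.IH unfolding length_Cons sum.lessThan_Suc_shift by simp
qed

lemma pd_le1: "is_pd P \<Longrightarrow> P x \<le> 1"
  unfolding is_pd_def using member_le_sum[of x UNIV P] by auto

lemma chan_nn: "is_channel W \<Longrightarrow> 0 \<le> W y x"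
  by (simp add: is_channel_def is_pd_def)
lemma chan_le1: "is_channel W \<Longrightarrow> W y x \<le> 1"
  using pd_le1[of "\<lambda>y. W y x" y] by (simp add: is_channel_def)
lemma chan_sum: "is_channel W \<Longrightarrow> (\<Sum>y\<in>UNIV. W y x) = 1"
  by (simp add: is_channel_def is_pd_def)

lemma outdist_nn: "is_pd P \<Longrightarrow> is_channel W \<Longrightarrow> 0 \<le> outdist P W y"
  unfolding outdist_def by (intro sum_nonneg) (simp add: is_pd_def chan_nn)

lemma outdist_ge: "is_pd P \<Longrightarrow> is_channel W \<Longrightarrow> P x * W y x \<le> outdist P W y"
  unfolding outdist_def by (rule member_le_sum) (auto simp: is_pd_def chan_nn)

lemma outdist_le1: "is_pd P \<Longrightarrow> is_channel W \<Longrightarrow> outdist P W y \<le> 1"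
proof -
  assume a: "is_pd P" "is_channel W"
  have "outdist P W y \<le> (\<Sum>x\<in>UNIV. P x * 1)" unfolding outdist_def
    by (intro sum_mono mult_left_mono) (use a in \<open>auto simp: is_pd_def chan_le1\<close>)
  then show ?thesis using a by (simp add: is_pd_def)
qed

lemma outdist_sum: "is_pd P \<Longrightarrow> is_channel W \<Longrightarrow> (\<Sum>y\<in>UNIV. outdist P W y) = 1"
  unfolding outdist_def by (subst sum.swap) (simp add: sum_distrib_left[symmetric] chan_sum is_pd_def)

lemma abs_ln_le: "0 < (u::real) \<Longrightarrow> u \<le> 1 \<Longrightarrow> \<bar>ln u\<bar> \<le> 1 / u"
proof -
  assume u: "0 < u" "u \<le> 1"
  have "ln (1/u) \<le> 1/u - 1" using ln_le_minus_one[of "1/u"] u by simp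
  then have "- ln u \<le> 1/u - 1" using u by (simp add: ln_div)
  moreover have "ln u \<le> 0" using u by simp
  ultimately show ?thesis by (smt (verit))
qed

lemma xlnx_bound: "0 \<le> (s::real) \<Longrightarrow> s \<le> 1 \<Longrightarrow> \<bar>s * ln s\<bar> \<le> 2 * sqrt s"
proof (cases "s = 0")
  case False
  assume s: "0 \<le> s" "s \<le> 1"
  then have s0: "0 < s" using False by simp
  have u: "0 < sqrt s" "sqrt s \<le> 1" using s0 s by auto
  have "ln s = 2 * ln (sqrt s)" using s0 by (simp add: ln_sqrt)
  then have "\<bar>s * ln s\<bar> = 2 * s * \<bar>ln (sqrt s)\<bar>" using s0 by (simp add: abs_mult)
  also have "\<dots> \<le> 2 * s * (1 / sqrt s)" using abs_ln_le[OF u] s0 by (intro mult_left_mono) auto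
  also have "\<dots> = 2 * sqrt s" using s0 by (simp add: field_simps)
  finally show ?thesis .
qed simp

lemma xln2x_bound: "0 \<le> (s::real) \<Longrightarrow> s \<le> 1 \<Longrightarrow> s * (ln s)\<^sup>2 \<le> 4"
proof (cases "s = 0")
  case False
  assume s: "0 \<le> s" "s \<le> 1"
  then have s0: "0 < s" using False by simp
  have u: "0 < sqrt s" "sqrt s \<le> 1" using s0 s by auto
  have "ln s = 2 * ln (sqrt s)" using s0 by (simp add: ln_sqrt)
  then have "s * (ln s)\<^sup>2 = 4 * (sqrt s)\<^sup>2 * \<bar>ln (sqrt s)\<bar>\<^sup>2" using s0 by (simp add: power2_eq_square)
  also have "\<dots> \<le> 4 * (sqrt s)\<^sup>2 * (1 / sqrt s)\<^sup>2"
    using abs_ln_le[OF u] by (intro mult_left_mono power_mono) auto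
  also have "\<dots> = 4" using u by (simp add: field_simps)
  finally show ?thesis .
qed simp

lemma xlnx_tendsto:
  fixes t :: "nat \<Rightarrow> real"
  assumes "\<And>n. 0 \<le> t n" "t \<longlonglongrightarrow> a"
  shows "(\<lambda>n. t n * ln (t n)) \<longlonglongrightarrow> a * ln a"
proof (cases "a = 0")
  case True
  have "(\<lambda>n. 2 * sqrt (t n)) \<longlonglongrightarrow> 2 * sqrt 0"
    using assms True by (intro tendsto_intros) auto
  then have g: "(\<lambda>n. 2 * sqrt (t n)) \<longlonglongrightarrow> 0" by simp
  have "eventually (\<lambda>n. t n < 1) sequentially"
    using assms(2) True by (intro order_tendstoD) auto
  then have "eventually (\<lambda>n. norm (t n * ln (t n)) \<le> 2 * sqrt (t n)) sequentially"
    by eventually_elim (use assms(1) xlnx_bound in auto)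
  then have "(\<lambda>n. t n * ln (t n)) \<longlonglongrightarrow> 0" using g by (rule Lim_null_comparison)
  then show ?thesis using True by simp
next
  case False
  then have "a > 0" using assms by (metis LIMSEQ_le_const less_eq_real_def)
  then show ?thesis using assms by (intro tendsto_intros) auto
qed

lemma mi_decomp:
  assumes P: "is_pd P" and W: "is_channel W"
  shows "mutual_info P W = (\<Sum>x\<in>UNIV. P x * (\<Sum>y\<in>UNIV. W y x * ln (W y x)))
           - (\<Sum>y\<in>UNIV. outdist P W y * ln (outdist P W y))"
proof -
  have trm: "(if P x * W y x = 0 then 0 else P x * W y x * ln (W y x / outdist P W y))
      = P x * (W y x * ln (W y x)) - P x * W y x * ln (outdist P W y)" for x y
  proof (cases "P x * W y x = 0")
    case False
    then have pos: "P x > 0" "W y x > 0" using P chan_nn[OF W, of y x] by (auto simp: is_pd_def less_eq_real_def)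
    have "outdist P W y \<ge> P x * W y x" by (rule outdist_ge[OF P W])
    then have "outdist P W y > 0" using pos by (smt (verit) mult_pos_pos)
    then show ?thesis using False pos by (simp add: ln_div algebra_simps)
  qed auto
  have "mutual_info P W = (\<Sum>x\<in>UNIV. \<Sum>y\<in>UNIV. P x * (W y x * ln (W y x)) - P x * W y x * ln (outdist P W y))"
    unfolding mutual_info_def using trm by simp
  also have "\<dots> = (\<Sum>x\<in>UNIV. P x * (\<Sum>y\<in>UNIV. W y x * ln (W y x)))
       - (\<Sum>x\<in>UNIV. \<Sum>y\<in>UNIV. P x * W y x * ln (outdist P W y))"
    by (simp add: sum_subtractf sum_distrib_left)
  also have "(\<Sum>x\<in>UNIV. \<Sum>y\<in>UNIV. P x * W y x * ln (outdist P W y)) = (\<Sum>y\<in>UNIV. outdist P W y * ln (outdist P W y))"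
    unfolding outdist_def by (subst sum.swap) (simp add: sum_distrib_right)
  finally show ?thesis .
qed

lemma mi_le:
  fixes W :: "'y::finite \<Rightarrow> 'x::finite \<Rightarrow> real"
  assumes P: "is_pd P" and W: "is_channel W"
  shows "mutual_info P W \<le> 2 * real CARD('y)"
proof -
  have a: "(\<Sum>x\<in>UNIV. P x * (\<Sum>y\<in>UNIV. W y x * ln (W y x))) \<le> 0"
  proof -
    have lnW: "ln (W y x) \<le> 0" for x y
    proof (cases "W y x = 0")
      case False
      then have "0 < W y x" using chan_nn[OF W, of y x] by simp
      then show ?thesis using chan_le1[OF W, of y x] by simp
    qed simp
    show ?thesis using P W lnW by (intro sum_nonpos mult_nonneg_nonpos sum_nonpos mult_nonneg_nonpos)
      (auto simp: is_pd_def chan_nn chan_le1)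
  qed
  have b: "- (\<Sum>y\<in>(UNIV::'y set). outdist P W y * ln (outdist P W y)) \<le> (\<Sum>y\<in>(UNIV::'y set). 2)"
  proof -
    have "- (\<Sum>y\<in>(UNIV::'y set). outdist P W y * ln (outdist P W y)) = (\<Sum>y\<in>(UNIV::'y set). - (outdist P W y * ln (outdist P W y)))"
      by (simp add: sum_negf)
    also have "\<dots> \<le> (\<Sum>y\<in>(UNIV::'y set). 2)"
    proof (intro sum_mono)
      fix y
      have "\<bar>outdist P W y * ln (outdist P W y)\<bar> \<le> 2 * sqrt (outdist P W y)"
        using xlnx_bound outdist_nn[OF P W] outdist_le1[OF P W] by blast
      also have "\<dots> \<le> 2" using outdist_nn[OF P W] outdist_le1[OF P W] by simp
      finally show "- (outdist P W y * ln (outdist P W y)) \<le> 2" by linarith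
    qed
    finally show ?thesis .
  qed
  show ?thesis using mi_decomp[OF P W] a b by simp
qed

lemma mi_tendsto:
  assumes W: "is_channel W" and Ps: "\<And>n. is_pd (Ps n)" and P: "is_pd P"
    and lim: "\<And>x. (\<lambda>n. Ps n x) \<longlonglongrightarrow> P x"
  shows "(\<lambda>n. mutual_info (Ps n) W) \<longlonglongrightarrow> mutual_info P W"
proof -
  have q: "(\<lambda>n. outdist (Ps n) W y) \<longlonglongrightarrow> outdist P W y" for y
    unfolding outdist_def by (intro tendsto_intros lim)
  have xl: "(\<lambda>n. outdist (Ps n) W y * ln (outdist (Ps n) W y)) \<longlonglongrightarrow> outdist P W y * ln (outdist P W y)" for y
    by (rule xlnx_tendsto[OF outdist_nn[OF Ps W] q])
  have A: "(\<lambda>n. (\<Sum>x\<in>UNIV. Ps n x * (\<Sum>y\<in>UNIV. W y x * ln (W y x)))) \<longlonglongrightarrow> (\<Sum>x\<in>UNIV. P x * (\<Sum>y\<in>UNIV. W y x * ln (W y x)))"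
    by (intro tendsto_sum tendsto_mult_right lim)
  have B: "(\<lambda>n. (\<Sum>y\<in>UNIV. outdist (Ps n) W y * ln (outdist (Ps n) W y))) \<longlonglongrightarrow> (\<Sum>y\<in>UNIV. outdist P W y * ln (outdist P W y))"
    by (intro tendsto_sum xl)
  note tendsto_diff[OF A B]
  then show ?thesis using mi_decomp[OF Ps W] mi_decomp[OF P W] by simp
qed

lemma gap:
  fixes W :: "'y::finite \<Rightarrow> 'x::finite \<Rightarrow> real"
  assumes W: "is_channel W" and d: "\<delta> > 0"
  shows "\<exists>\<eta>>0. \<forall>Q\<in>S3 W \<delta>. mutual_info Q W \<le> capacity W - \<eta>"
proof (rule ccontr)
  assume na: "\<not> ?thesis"
  have "\<forall>k::nat. \<exists>Q\<in>S3 W \<delta>. mutual_info Q W > capacity W - inverse (real (Suc k))"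
  proof
    fix k :: nat
    have "inverse (real (Suc k)) > 0" by simp
    then show "\<exists>Q\<in>S3 W \<delta>. mutual_info Q W > capacity W - inverse (real (Suc k))"
      using na by (auto simp: not_le)
  qed
  then obtain Qs where QS: "\<And>k. Qs k \<in> S3 W \<delta>"
    and QI: "\<And>k. mutual_info (Qs k) W > capacity W - inverse (real (Suc k))" by metis
  have pd: "is_pd (Qs k)" for k using QS[of k] by (simp add: S3_def)
  define v :: "nat \<Rightarrow> real^'x" where "v k = (\<chi> x. Qs k x)" for k
  have "v k \<in> cbox 0 1" for k
    unfolding v_def mem_box_cart using pd[of k] pd_le1[of "Qs k"] by (auto simp: is_pd_def)
  then obtain l r where r: "strict_mono r" and lr: "(v \<circ> r) \<longlonglongrightarrow> l"
    using seq_compactE[OF compact_imp_seq_compact[OF compact_cbox[of "0::real^'x" 1]]] by metis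
  define P where "P x = l $ x" for x
  have lim: "(\<lambda>n. Qs (r n) x) \<longlonglongrightarrow> P x" for x
    using tendsto_vec_nth[OF lr, of x] by (simp add: P_def v_def comp_def)
  have Pnn: "P x \<ge> 0" for x
    using lim[of x] pd by (intro LIMSEQ_le_const) (auto simp: is_pd_def)
  have "(\<lambda>n. \<Sum>x\<in>UNIV. Qs (r n) x) \<longlonglongrightarrow> (\<Sum>x\<in>UNIV. P x)"
    by (intro tendsto_sum lim)
  moreover have "(\<lambda>n. \<Sum>x\<in>UNIV. Qs (r n) x) = (\<lambda>n. 1)" using pd by (simp add: is_pd_def)
  ultimately have "(\<lambda>n. 1::real) \<longlonglongrightarrow> (\<Sum>x\<in>UNIV. P x)" by simp
  then have "(\<Sum>x\<in>UNIV. P x) = 1" using LIMSEQ_unique[OF _ tendsto_const] by metis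
  then have Ppd: "is_pd P" using Pnn by (simp add: is_pd_def)
  have mi: "(\<lambda>n. mutual_info (Qs (r n)) W) \<longlonglongrightarrow> mutual_info P W"
    using mi_tendsto[OF W _ Ppd lim] pd by blast
  have bdd: "bdd_above ((\<lambda>P. mutual_info P W) ` {P. is_pd P})"
    using mi_le[OF _ W] by (intro bdd_aboveI2[where M="2 * real CARD('y)"]) auto
  have le: "mutual_info P W \<le> capacity W"
    unfolding capacity_def using Ppd by (intro cSUP_upper[OF _ bdd]) auto
  have c: "(\<lambda>n. capacity W - inverse (real (Suc n))) \<longlonglongrightarrow> capacity W - 0"
    by (intro tendsto_intros LIMSEQ_inverse_real_of_nat)
  have "capacity W - inverse (real (Suc n)) \<le> mutual_info (Qs (r n)) W" for n
  proof -
    have "n \<le> r n" using seq_suble[OF r] by simp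
    then have "inverse (real (Suc (r n))) \<le> inverse (real (Suc n))"
      by (simp add: le_imp_inverse_le)
    then show ?thesis using QI[of "r n"] by linarith
  qed
  then have "capacity W \<le> mutual_info P W"
    using c mi by (intro LIMSEQ_le[OF _ mi]) auto
  with le have Pcap: "P \<in> cap_achieving W" using Ppd by (simp add: cap_achieving_def)
  have "(\<lambda>n. dist2 (Qs (r n)) P) \<longlonglongrightarrow> sqrt (\<Sum>x\<in>UNIV. (P x - P x)\<^sup>2)"
    unfolding dist2_def by (intro tendsto_intros lim)
  then have "(\<lambda>n. dist2 (Qs (r n)) P) \<longlonglongrightarrow> 0" by simp
  then have "eventually (\<lambda>n. dist2 (Qs (r n)) P < \<delta>) sequentially"
    using d by (intro order_tendstoD) auto
  then obtain n where n: "dist2 (Qs (r n)) P < \<delta>" unfolding eventually_sequentially by blast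
  have "\<delta> < (INF Ps\<in>cap_achieving W. dist2 (Qs (r n)) Ps)" using QS[of "r n"] by (simp add: S3_def)
  also have "\<dots> \<le> dist2 (Qs (r n)) P"
    using Pcap by (intro cINF_lower bdd_belowI2[where m=0]) (auto simp: dist2_def intro: sum_nonneg)
  finally show False using n by simp
qed

lemma count_comp:
  assumes "length xs = N" "N > 0" "composition xs = Q"
  shows "real (length (filter (\<lambda>z. z = x) xs)) = real N * Q x"
proof -
  have "real (length (filter (\<lambda>z. z = x) xs)) / real N = Q x"
    using assms by (auto simp: composition_def fun_eq_iff)
  then show ?thesis using assms(2) by (simp add: field_simps)
qed

lemma mi_as_sum:
  "mutual_info Q W = (\<Sum>x\<in>UNIV. Q x * (\<Sum>y\<in>UNIV. W y x * info_dens Q W x y))"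
  unfolding mutual_info_def info_dens_def
  by (intro sum.cong refl) (auto simp: sum_distrib_left intro!: sum.cong)

lemma sq_bound:
  fixes W :: "'y::finite \<Rightarrow> 'x::finite \<Rightarrow> real"
  assumes P: "is_pd P" and W: "is_channel W"
  shows "(\<Sum>x\<in>UNIV. P x * (\<Sum>y\<in>UNIV. W y x * (info_dens P W x y)\<^sup>2)) \<le> 16 * real CARD('y)"
proof -
  have pt: "P x * (W y x * (info_dens P W x y)\<^sup>2)
     \<le> 2 * P x * (W y x * (ln (W y x))\<^sup>2) + 2 * (P x * W y x) * (ln (outdist P W y))\<^sup>2" for x y
  proof (cases "P x * W y x = 0")
    case True
    then show ?thesis using P W by (auto simp: is_pd_def chan_nn)
  next
    case False
    then have pos: "P x > 0" "W y x > 0" using P chan_nn[OF W, of y x] by (auto simp: is_pd_def less_eq_real_def)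
    have "outdist P W y \<ge> P x * W y x" by (rule outdist_ge[OF P W])
    then have q: "outdist P W y > 0" using pos by (smt (verit) mult_pos_pos)
    have id: "info_dens P W x y = ln (W y x) - ln (outdist P W y)"
      using pos q by (simp add: info_dens_def ln_div)
    have "(ln (W y x) - ln (outdist P W y))\<^sup>2 \<le> 2 * (ln (W y x))\<^sup>2 + 2 * (ln (outdist P W y))\<^sup>2"
    proof -
      have h: "0 \<le> (ln (W y x) + ln (outdist P W y))\<^sup>2" by simp
      show ?thesis using h unfolding power2_eq_square by (simp add: algebra_simps)
    qed
    then have "P x * W y x * (info_dens P W x y)\<^sup>2 \<le> P x * W y x * (2 * (ln (W y x))\<^sup>2 + 2 * (ln (outdist P W y))\<^sup>2)"
      unfolding id using pos by (intro mult_left_mono) auto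
    then show ?thesis by (simp add: algebra_simps)
  qed
  have b1: "W y x * (ln (W y x))\<^sup>2 \<le> 4" for x y
    using xln2x_bound[OF chan_nn[OF W] chan_le1[OF W]] .
  have b2: "outdist P W y * (ln (outdist P W y))\<^sup>2 \<le> 4" for y
    using xln2x_bound[OF outdist_nn[OF P W] outdist_le1[OF P W]] .
  have "(\<Sum>x\<in>UNIV. P x * (\<Sum>y\<in>UNIV. W y x * (info_dens P W x y)\<^sup>2))
     = (\<Sum>x\<in>UNIV. \<Sum>y\<in>UNIV. P x * (W y x * (info_dens P W x y)\<^sup>2))" by (simp add: sum_distrib_left)
  also have "\<dots> \<le> (\<Sum>x\<in>UNIV. \<Sum>y\<in>UNIV. 2 * P x * (W y x * (ln (W y x))\<^sup>2) + 2 * (P x * W y x) * (ln (outdist P W y))\<^sup>2)"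
    by (intro sum_mono pt)
  also have "\<dots> = (\<Sum>x\<in>UNIV. \<Sum>y\<in>UNIV. 2 * P x * (W y x * (ln (W y x))\<^sup>2)) + 2 * (\<Sum>y\<in>UNIV. outdist P W y * (ln (outdist P W y))\<^sup>2)"
    unfolding outdist_def
    by (simp add: sum.distrib sum_distrib_left sum_distrib_right mult.assoc) (subst sum.swap, simp)
  also have "\<dots> \<le> (\<Sum>x\<in>UNIV. \<Sum>y\<in>(UNIV::'y set). 2 * P x * 4) + 2 * (\<Sum>y\<in>(UNIV::'y set). 4)"
    using b1 b2 P by (intro add_mono mult_left_mono sum_mono) (auto simp: is_pd_def)
  also have "\<dots> = 16 * real CARD('y)"
  proof -
    have "(\<Sum>x\<in>UNIV. \<Sum>y\<in>(UNIV::'y set). 2 * P x * 4) = real CARD('y) * 8 * (\<Sum>x\<in>UNIV. P x)"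
      by (simp add: sum_distrib_left sum_distrib_right mult.commute mult.left_commute)
    then show ?thesis using P by (simp add: is_pd_def)
  qed
  finally show ?thesis .
qed

lemma count_pos:
  assumes "i < length xs" shows "real (length (filter (\<lambda>z. z = xs!i) xs)) \<ge> 1"
proof -
  have "xs!i \<in> set (filter (\<lambda>z. z = xs!i) xs)" using assms by simp
  then have "length (filter (\<lambda>z. z = xs!i) xs) > 0" by (rule length_pos_if_in_set)
  then show ?thesis by linarith
qed

lemma chan_prob_nn: "is_channel W \<Longrightarrow> 0 \<le> chan_prob W xs ys"
  unfolding chan_prob_def by (simp add: prod_nonneg chan_nn)

lemma converse:
  fixes W :: "'y::finite \<Rightarrow> 'x::finite \<Rightarrow> real" and enc :: "nat \<Rightarrow> 'x list" and dec :: "'y list \<Rightarrow> nat"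
  assumes W: "is_channel W" and Q: "is_pd Q" and N: "N > 0" and M: "M > 0" and t: "t > 0"
    and code: "\<And>m. m \<in> {1..M} \<Longrightarrow> length (enc m) = N \<and> composition (enc m) = Q"
  shows "1 - avg_error W N M enc dec \<le> 16 * real CARD('y) * real N / t\<^sup>2 + exp (real N * mutual_info Q W + t) / real M"
proof -
  define q where "q ys = (\<Prod>i<N. outdist Q W (ys!i))" for ys :: "'y list"
  define A where "A m = {ys \<in> Ln N. dec ys = m}" for m
  define E where "E = exp (real N * mutual_info Q W + t)"
  define K where "K = 16 * real CARD('y) * real N / t\<^sup>2"
  have finA: "finite (A m)" for m unfolding A_def by (rule finite_subset[OF _ finite_Ln]) auto
  have AL: "A m \<subseteq> Ln N" for m unfolding A_def by auto
  have qnn: "q ys \<ge> 0" for ys unfolding q_def using outdist_nn[OF Q W] by (simp add: prod_nonneg)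
  have per: "(\<Sum>ys\<in>A m. chan_prob W (enc m) ys) \<le> K + E * (\<Sum>ys\<in>A m. q ys)" if m: "m \<in> {1..M}" for m
  proof -
    define xs where "xs = enc m"
    have lenx: "length xs = N" and comp: "composition xs = Q" using code[OF m] by (auto simp: xs_def)
    define mm where "mm x = (\<Sum>y\<in>UNIV. W y x * info_dens Q W x y)" for x
    define g where "g x y = info_dens Q W x y - mm x" for x y
    have cen: "(\<Sum>y\<in>UNIV. W y x * g x y) = 0" for x
      unfolding g_def by (simp add: right_diff_distrib sum_subtractf sum_distrib_right[symmetric] chan_sum[OF W] mm_def)
    have cnt: "real (length (filter (\<lambda>z. z = x) xs)) = real N * Q x" for x
      by (rule count_comp[OF lenx N comp])
    have Qpos: "Q (xs!i) > 0" if "i < N" for i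
    proof -
      have "real N * Q (xs!i) \<ge> 1" using count_pos[of i xs] that lenx cnt[of "xs!i"] by simp
      then show ?thesis using N by (smt (verit) mult_nonneg_nonpos of_nat_0_le_iff)
    qed
    have meanL: "(\<Sum>i<N. mm (xs!i)) = real N * mutual_info Q W"
      using sum_count[of mm xs] lenx cnt by (simp add: mi_as_sum mm_def sum_distrib_left mult.assoc)
    define L where "L ys = (\<Sum>i<N. info_dens Q W (xs!i) (ys!i))" for ys :: "'y list"
    have Lg: "(\<Sum>i<N. g (xs!i) (ys!i)) = L ys - real N * mutual_info Q W" for ys
      unfolding g_def L_def by (simp add: sum_subtractf meanL)
    have vx: "(\<Sum>y\<in>UNIV. W y x * (g x y)\<^sup>2) \<le> (\<Sum>y\<in>UNIV. W y x * (info_dens Q W x y)\<^sup>2)" for x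
    proof -
      have "(\<Sum>y\<in>UNIV. W y x * (g x y)\<^sup>2) = (\<Sum>y\<in>UNIV. W y x * (info_dens Q W x y)\<^sup>2
           - 2 * mm x * (W y x * info_dens Q W x y) + (mm x)\<^sup>2 * W y x)"
        unfolding g_def by (intro sum.cong refl) (simp add: power2_eq_square algebra_simps)
      also have "\<dots> = (\<Sum>y\<in>UNIV. W y x * (info_dens Q W x y)\<^sup>2) - (mm x)\<^sup>2"
        by (simp add: sum.distrib sum_subtractf sum_distrib_left[symmetric] chan_sum[OF W] mm_def[symmetric] power2_eq_square)
      finally show ?thesis by simp
    qed
    have var: "(\<Sum>ys\<in>Ln N. chan_prob W xs ys * (\<Sum>i<N. g (xs!i) (ys!i))\<^sup>2) \<le> 16 * real CARD('y) * real N"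
    proof -
      have "(\<Sum>ys\<in>Ln N. chan_prob W xs ys * (\<Sum>i<N. g (xs!i) (ys!i))\<^sup>2)
          = (\<Sum>i<N. \<Sum>y\<in>UNIV. W y (xs!i) * (g (xs!i) y)\<^sup>2)"
        using second_moment[OF W cen, of xs] lenx by simp
      also have "\<dots> = (\<Sum>x\<in>UNIV. real N * Q x * (\<Sum>y\<in>UNIV. W y x * (g x y)\<^sup>2))"
        using sum_count[of "\<lambda>x. \<Sum>y\<in>UNIV. W y x * (g x y)\<^sup>2" xs] lenx cnt by simp
      also have "\<dots> \<le> (\<Sum>x\<in>UNIV. real N * Q x * (\<Sum>y\<in>UNIV. W y x * (info_dens Q W x y)\<^sup>2))"
        using Q by (intro sum_mono mult_left_mono vx) (auto simp: is_pd_def)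
      also have "\<dots> = real N * (\<Sum>x\<in>UNIV. Q x * (\<Sum>y\<in>UNIV. W y x * (info_dens Q W x y)\<^sup>2))"
        by (simp add: sum_distrib_left mult.assoc)
      also have "\<dots> \<le> real N * (16 * real CARD('y))"
        using sq_bound[OF Q W] by (intro mult_left_mono) auto
      finally show ?thesis by (simp add: algebra_simps)
    qed
    have cpL: "chan_prob W xs ys \<le> exp (L ys) * q ys" for ys
    proof -
      have "chan_prob W xs ys = (\<Prod>i<N. W (ys!i) (xs!i))" unfolding chan_prob_def lenx ..
      also have "\<dots> \<le> (\<Prod>i<N. exp (info_dens Q W (xs!i) (ys!i)) * outdist Q W (ys!i))"
      proof (intro prod_mono conjI)
        fix i assume "i \<in> {..<N}"
        then have qi: "Q (xs!i) > 0" using Qpos by simp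
        show "0 \<le> W (ys!i) (xs!i)" using chan_nn[OF W] .
        show "W (ys!i) (xs!i) \<le> exp (info_dens Q W (xs!i) (ys!i)) * outdist Q W (ys!i)"
        proof (cases "W (ys!i) (xs!i) = 0")
          case True then show ?thesis using outdist_nn[OF Q W] by simp
        next
          case False
          then have wp: "W (ys!i) (xs!i) > 0" using chan_nn[OF W, of "ys!i" "xs!i"] by simp
          have "outdist Q W (ys!i) \<ge> Q (xs!i) * W (ys!i) (xs!i)" by (rule outdist_ge[OF Q W])
          then have op: "outdist Q W (ys!i) > 0" using qi wp by (smt (verit) mult_pos_pos)
          show ?thesis using False wp op by (simp add: info_dens_def)
        qed
      qed
      also have "\<dots> = exp (L ys) * q ys"
        unfolding L_def q_def by (simp add: exp_sum prod.distrib)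
      finally show ?thesis .
    qed
    have pt: "chan_prob W xs ys \<le> chan_prob W xs ys * (\<Sum>i<N. g (xs!i) (ys!i))\<^sup>2 / t\<^sup>2 + E * q ys" for ys
    proof (cases "L ys \<le> real N * mutual_info Q W + t")
      case True
      have "chan_prob W xs ys \<le> exp (L ys) * q ys" by (rule cpL)
      also have "\<dots> \<le> E * q ys" unfolding E_def using True qnn by (intro mult_right_mono) auto
      finally show ?thesis
        using chan_prob_nn[OF W] by (smt (verit) divide_nonneg_nonneg mult_nonneg_nonneg zero_le_power2)
    next
      case False
      then have "(\<Sum>i<N. g (xs!i) (ys!i)) > t" using Lg by simp
      then have "t\<^sup>2 \<le> (\<Sum>i<N. g (xs!i) (ys!i))\<^sup>2" using t by (intro power_mono) auto
      then have "1 \<le> (\<Sum>i<N. g (xs!i) (ys!i))\<^sup>2 / t\<^sup>2" using t by simp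
      then have "chan_prob W xs ys * 1 \<le> chan_prob W xs ys * ((\<Sum>i<N. g (xs!i) (ys!i))\<^sup>2 / t\<^sup>2)"
        using chan_prob_nn[OF W] by (intro mult_left_mono) auto
      moreover have "E * q ys \<ge> 0" unfolding E_def using qnn by simp
      ultimately show ?thesis by simp
    qed
    have "(\<Sum>ys\<in>A m. chan_prob W xs ys) \<le> (\<Sum>ys\<in>A m. chan_prob W xs ys * (\<Sum>i<N. g (xs!i) (ys!i))\<^sup>2 / t\<^sup>2 + E * q ys)"
      by (intro sum_mono pt)
    also have "\<dots> = (\<Sum>ys\<in>A m. chan_prob W xs ys * (\<Sum>i<N. g (xs!i) (ys!i))\<^sup>2) / t\<^sup>2 + E * (\<Sum>ys\<in>A m. q ys)"
      by (simp add: sum.distrib sum_divide_distrib sum_distrib_left)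
    finally have s1: "(\<Sum>ys\<in>A m. chan_prob W xs ys) \<le> (\<Sum>ys\<in>A m. chan_prob W xs ys * (\<Sum>i<N. g (xs!i) (ys!i))\<^sup>2) / t\<^sup>2 + E * (\<Sum>ys\<in>A m. q ys)" .
    have "(\<Sum>ys\<in>A m. chan_prob W xs ys * (\<Sum>i<N. g (xs!i) (ys!i))\<^sup>2) \<le> (\<Sum>ys\<in>Ln N. chan_prob W xs ys * (\<Sum>i<N. g (xs!i) (ys!i))\<^sup>2)"
      using AL finite_Ln chan_prob_nn[OF W] by (intro sum_mono2) auto
    also note var
    finally have "(\<Sum>ys\<in>A m. chan_prob W xs ys * (\<Sum>i<N. g (xs!i) (ys!i))\<^sup>2) / t\<^sup>2 \<le> K"
      unfolding K_def using t by (simp add: divide_right_mono)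
    then show ?thesis using s1 unfolding xs_def by simp
  qed
  have lenN: "length (enc m) = N" if "m \<in> {1..M}" for m using code[OF that] by simp
  have one: "1 \<in> {1..M}" using M by simp
  have qsumL: "(\<Sum>ys\<in>Ln N. q ys) = 1"
  proof -
    have "(\<Sum>ys\<in>Ln (length (enc 1)). \<Prod>i<length (enc 1). outdist Q W (ys!i))
        = (\<Prod>i<length (enc 1). \<Sum>y\<in>UNIV. outdist Q W y)"
      using sum_prod_Ln[of "\<lambda>x y. outdist Q W y" "enc 1"] by simp
    then show ?thesis using lenN[OF one] outdist_sum[OF Q W] unfolding q_def by simp
  qed
  have qsum: "(\<Sum>m\<in>{1..M}. \<Sum>ys\<in>A m. q ys) \<le> 1"
  proof -
    have "(\<Sum>m\<in>{1..M}. \<Sum>ys\<in>A m. q ys) = (\<Sum>m\<in>{1..M}. \<Sum>ys\<in>Ln N. if dec ys = m then q ys else 0)"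
      unfolding A_def by (rule sum.cong[OF refl], rule sum.inter_filter[OF finite_Ln])
    also have "\<dots> = (\<Sum>ys\<in>Ln N. \<Sum>m\<in>{1..M}. if dec ys = m then q ys else 0)"
      by (rule sum.swap)
    also have "\<dots> = (\<Sum>ys\<in>Ln N. if dec ys \<in> {1..M} then q ys else 0)"
      by (simp add: sum.delta')
    also have "\<dots> \<le> (\<Sum>ys\<in>Ln N. q ys)" using qnn by (intro sum_mono) auto
    finally show ?thesis using qsumL by simp
  qed
  have avg: "avg_error W N M enc dec = 1 - (1 / real M) * (\<Sum>m\<in>{1..M}. \<Sum>ys\<in>A m. chan_prob W (enc m) ys)"
  proof -
    have "(\<Sum>ys\<in>{ys. length ys = N \<and> dec ys \<noteq> m}. chan_prob W (enc m) ys) = 1 - (\<Sum>ys\<in>A m. chan_prob W (enc m) ys)"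
      if m: "m \<in> {1..M}" for m
    proof -
      have "{ys. length ys = N \<and> dec ys \<noteq> m} = Ln N - A m" unfolding A_def Ln_def by auto
      then have "(\<Sum>ys\<in>{ys. length ys = N \<and> dec ys \<noteq> m}. chan_prob W (enc m) ys)
          = (\<Sum>ys\<in>Ln N. chan_prob W (enc m) ys) - (\<Sum>ys\<in>A m. chan_prob W (enc m) ys)"
        using sum_diff[OF finite_Ln AL] by simp
      then show ?thesis using sum_chan_prob[OF W, of "enc m"] lenN[OF m] by simp
    qed
    then have "avg_error W N M enc dec = (1 / real M) * (\<Sum>m\<in>{1..M}. 1 - (\<Sum>ys\<in>A m. chan_prob W (enc m) ys))"
      unfolding avg_error_def by simp
    also have "\<dots> = (1 / real M) * (real M - (\<Sum>m\<in>{1..M}. \<Sum>ys\<in>A m. chan_prob W (enc m) ys))"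
      by (simp add: sum_subtractf)
    also have "\<dots> = 1 - (1 / real M) * (\<Sum>m\<in>{1..M}. \<Sum>ys\<in>A m. chan_prob W (enc m) ys)"
      using M by (simp add: field_simps)
    finally show ?thesis .
  qed
  have "(\<Sum>m\<in>{1..M}. \<Sum>ys\<in>A m. chan_prob W (enc m) ys) \<le> (\<Sum>m\<in>{1..M}. K + E * (\<Sum>ys\<in>A m. q ys))"
    by (intro sum_mono per)
  also have "\<dots> = real M * K + E * (\<Sum>m\<in>{1..M}. \<Sum>ys\<in>A m. q ys)"
    by (simp add: sum.distrib sum_distrib_left)
  also have "\<dots> \<le> real M * K + E * 1"
    unfolding E_def using qsum by (intro add_left_mono mult_left_mono) auto
  finally have "(1 / real M) * (\<Sum>m\<in>{1..M}. \<Sum>ys\<in>A m. chan_prob W (enc m) ys) \<le> (1 / real M) * (real M * K + E)"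
    using M by (intro mult_left_mono) auto
  also have "\<dots> = K + E / real M" using M by (simp add: field_simps)
  finally show ?thesis using avg unfolding K_def E_def by simp
qed

theorem lemma12:
  fixes W :: "'y::finite \<Rightarrow> 'x::finite \<Rightarrow> real" and \<delta> \<epsilon> :: real
  assumes "is_channel W" and "capacity W > 0" and "\<delta> > 0" and "0 < \<epsilon>" and "\<epsilon> < 1"
  shows "\<exists>N0::nat. N0 \<ge> 1 \<and> (\<forall>N\<ge>N0. \<forall>(Q::'x \<Rightarrow> real) (enc::nat \<Rightarrow> 'x list) (dec::'y list \<Rightarrow> nat).
     (let R = capacity W + sqrt (V_eps \<epsilon> W / real N) * Phi_inv \<epsilon> in
       cc_code N R Q enc dec \<and> Q \<in> S3 W \<delta> \<longrightarrow> avg_error W N (num_msgs N R) enc dec > \<epsilon>))"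
proof -
  note W = assms(1)
  obtain \<eta> where eta: "\<eta> > 0" and gp: "\<And>Q. Q \<in> S3 W \<delta> \<Longrightarrow> mutual_info Q W \<le> capacity W - \<eta>"
    using gap[OF W assms(3)] by blast
  define Y where "Y = real CARD('y)"
  define K where "K = 256 * Y / \<eta>\<^sup>2 + 2 / \<eta>"
  define a where "a = \<bar>sqrt (V_eps \<epsilon> W) * Phi_inv \<epsilon>\<bar>"
  define N0 where "N0 = nat \<lceil>K / (1 - \<epsilon>) + (4 * a / \<eta>)\<^sup>2\<rceil> + 1"
  have K0: "K \<ge> 0" unfolding K_def Y_def using eta by simp
  have a0: "a \<ge> 0" unfolding a_def by simp
  have x0: "K / (1 - \<epsilon>) + (4 * a / \<eta>)\<^sup>2 \<ge> 0" using K0 assms(5) by simp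
  have N0gt: "real N0 > K / (1 - \<epsilon>) + (4 * a / \<eta>)\<^sup>2"
    unfolding N0_def using x0 by linarith
  show ?thesis
  proof (intro exI conjI allI impI)
    show "N0 \<ge> 1" unfolding N0_def by simp
    fix N :: nat and Q :: "'x \<Rightarrow> real" and enc :: "nat \<Rightarrow> 'x list" and dec :: "'y list \<Rightarrow> nat"
    assume N: "N \<ge> N0"
    define R where "R = capacity W + sqrt (V_eps \<epsilon> W / real N) * Phi_inv \<epsilon>"
    have Nbig: "real N > K / (1 - \<epsilon>) + (4 * a / \<eta>)\<^sup>2" using N N0gt by linarith
    have Npos: "N > 0" using Nbig x0 by (cases N) auto
    have NposR: "real N > 0" using Npos by simp
    show "let R = capacity W + sqrt (V_eps \<epsilon> W / real N) * Phi_inv \<epsilon> in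
       cc_code N R Q enc dec \<and> Q \<in> S3 W \<delta> \<longrightarrow> avg_error W N (num_msgs N R) enc dec > \<epsilon>"
      unfolding Let_def R_def[symmetric]
    proof
      assume H: "cc_code N R Q enc dec \<and> Q \<in> S3 W \<delta>"
      define M where "M = num_msgs N R"
      have Qpd: "is_pd Q" using H by (simp add: S3_def)
      have IQ: "mutual_info Q W \<le> capacity W - \<eta>" using H gp by blast
      have code: "\<And>m. m \<in> {1..M} \<Longrightarrow> length (enc m) = N \<and> composition (enc m) = Q"
        using H unfolding cc_code_def M_def by blast
      have Mge: "real M \<ge> exp (real N * R)"
        unfolding M_def num_msgs_def by (metis ceiling_correct of_int_ceiling_le_add_one le_of_int_ceiling
            nat_ceiling_le_eq of_nat_nat exp_gt_zero less_imp_le ceiling_le_zero not_le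
            of_nat_0_le_iff order_trans real_nat_ceiling_ge)
      have Mpos: "real M > 0" using Mge by (smt (verit) exp_gt_zero)
      then have M0: "M > 0" by simp
      define t where "t = real N * \<eta> / 4"
      have t0: "t > 0" unfolding t_def using NposR eta by simp
      have conv: "1 - avg_error W N M enc dec \<le> 16 * Y * real N / t\<^sup>2 + exp (real N * mutual_info Q W + t) / real M"
        using converse[OF W Qpd Npos M0 t0 code] unfolding Y_def by simp
      have f1: "16 * Y * real N / t\<^sup>2 = 256 * Y / \<eta>\<^sup>2 / real N"
        unfolding t_def using NposR eta by (simp add: field_simps power2_eq_square)
      have sbound: "\<bar>sqrt (V_eps \<epsilon> W / real N) * Phi_inv \<epsilon>\<bar> \<le> \<eta> / 4"
      proof -
        have e1: "\<bar>sqrt (V_eps \<epsilon> W / real N) * Phi_inv \<epsilon>\<bar> = a / sqrt (real N)"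
          unfolding a_def by (simp add: real_sqrt_divide abs_mult)
        have "real N \<ge> (4 * a / \<eta>)\<^sup>2" using Nbig K0 assms(5) by (smt (verit) divide_nonneg_pos)
        then have "sqrt (real N) \<ge> sqrt ((4 * a / \<eta>)\<^sup>2)" by (rule real_sqrt_le_mono)
        then have sN: "sqrt (real N) \<ge> 4 * a / \<eta>" using a0 eta by simp
        have sp: "sqrt (real N) > 0" using NposR by simp
        have "a \<le> \<eta> / 4 * sqrt (real N)" using sN eta by (simp add: field_simps)
        then have "a / sqrt (real N) \<le> \<eta> / 4" using sp by (simp add: field_simps)
        then show ?thesis using e1 by simp
      qed
      have expo: "real N * mutual_info Q W + t - real N * R \<le> - (real N * \<eta> / 2)"
      proof -
        have "real N * mutual_info Q W \<le> real N * (capacity W - \<eta>)"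
          using IQ NposR by (intro mult_left_mono) auto
        moreover have "real N * R \<ge> real N * (capacity W - \<eta> / 4)"
          unfolding R_def using sbound NposR by (intro mult_left_mono) auto
        ultimately show ?thesis unfolding t_def by (simp add: algebra_simps)
      qed
      have "exp (real N * mutual_info Q W + t) / real M \<le> exp (real N * mutual_info Q W + t) / exp (real N * R)"
        using Mge Mpos by (intro divide_left_mono) auto
      also have "\<dots> = exp (real N * mutual_info Q W + t - real N * R)" by (simp add: exp_diff)
      also have "\<dots> \<le> exp (- (real N * \<eta> / 2))" using expo by simp
      also have "\<dots> = 1 / exp (real N * \<eta> / 2)" by (simp add: exp_minus field_simps)
      also have "\<dots> \<le> 1 / (real N * \<eta> / 2)"
      proof -
        have "real N * \<eta> / 2 \<le> exp (real N * \<eta> / 2)"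
          using exp_ge_add_one_self[of "real N * \<eta> / 2"] by linarith
        then show ?thesis using NposR eta by (intro divide_left_mono) auto
      qed
      also have "\<dots> = 2 / \<eta> / real N" using NposR eta by (simp add: field_simps)
      finally have f2: "exp (real N * mutual_info Q W + t) / real M \<le> 2 / \<eta> / real N" .
      have "1 - avg_error W N M enc dec \<le> K / real N"
        using conv f1 f2 unfolding K_def by (simp add: add_divide_distrib)
      moreover have "K / real N < 1 - \<epsilon>"
      proof -
        have "K / (1 - \<epsilon>) < real N" using Nbig by (smt (verit) zero_le_power2)
        then have "K < real N * (1 - \<epsilon>)" using assms(5) by (simp add: field_simps)
        then show ?thesis using NposR by (simp add: field_simps)
      qed
      ultimately show "avg_error W N M enc dec > \<epsilon>" unfolding M_def by linarith
    qed
  qed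
qed

end
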